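(* Let $k\ge4$ be even and let $(i,j\mid s,t)\in\mathcal{O}(\mathbb{C},k)$ with $i,j,s,t\in\{1,2,\dots,k/2\}$. Then $i<j\iff s<t$, and $i<s\iff j<t$.
   Context: $\phi=\exp(2\pi\mathrm{i}/k)$, $\mathbf{k}=\{1,\dots,k-1\}$, $\mathbf{k}_0=\{0,\dots,k-1\}$. A quadruple $(i,j\mid s,t)\in\mathbf{k}^4$ with $i\ne s$ is an overlap if $\phi^\omega(\phi^j-1)(\phi^s-1)=(\phi^i-1)(\phi^t-1)$ for some $\omega\in\mathbf{k}_0$; it is trivial if one of $i\equiv\pm j$, $j\equiv\pm t$, $t\equiv\pm s$, $s\equiv\pm i\pmod k$ holds, nontrivial otherwise. $\mathcal{O}(\mathbb{C},k)$ is the set of nontrivial overlaps. *)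

theory Defs
  imports "HOL-Analysis.Analysis" "HOL-Number_Theory.Cong"
begin

definition phi :: "nat \<Rightarrow> complex" where
  "phi k = cis (2 * pi / real k)"

definition is_overlap :: "nat \<Rightarrow> nat \<Rightarrow> nat \<Rightarrow> nat \<Rightarrow> nat \<Rightarrow> bool" where
  "is_overlap k i j s t \<longleftrightarrow>
     i \<in> {1..k-1} \<and> j \<in> {1..k-1} \<and> s \<in> {1..k-1} \<and> t \<in> {1..k-1} \<and> i \<noteq> s \<and>
     (\<exists>\<omega>\<in>{0..k-1}. phi k ^ \<omega> * (phi k ^ j - 1) * (phi k ^ s - 1)
                       = (phi k ^ i - 1) * (phi k ^ t - 1))"

definition pm_cong :: "nat \<Rightarrow> nat \<Rightarrow> nat \<Rightarrow> bool" where
  "pm_cong k a b \<longleftrightarrow> [int a = int b] (mod int k) \<or> [int a = - int b] (mod int k)"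

definition is_trivial_overlap :: "nat \<Rightarrow> nat \<Rightarrow> nat \<Rightarrow> nat \<Rightarrow> nat \<Rightarrow> bool" where
  "is_trivial_overlap k i j s t \<longleftrightarrow>
     pm_cong k i j \<or> pm_cong k j t \<or> pm_cong k t s \<or> pm_cong k s i"

definition nontrivial_overlaps :: "nat \<Rightarrow> (nat \<times> nat \<times> nat \<times> nat) set" where
  "nontrivial_overlaps k = {(i, j, s, t). is_overlap k i j s t \<and> \<not> is_trivial_overlap k i j s t}"

end

theory Submission
  imports Defs
begin

lemma norm_g:
  "(cmod (phi k ^ a - 1))^2 = 2 - 2 * cos (2 * pi * real a / real k)"
proof -
  have "phi k ^ a = cis (real a * (2 * pi / real k))"
  proof -
    have d: "cis x ^ n = cis (real n * x)" for x :: real and n :: nat by (rule Complex.DeMoivre)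
    show ?thesis unfolding phi_def by (rule d)
  qed
  moreover have "(cmod (cis x - 1))^2 = 2 - 2 * cos x" for x
  proof -
    have "(cmod (cis x - 1))^2 = (cos x - 1)^2 + (sin x)^2"
      by (simp add: cmod_power2)
    also have "\<dots> = 2 - 2 * cos x" using sin_cos_squared_add[of x]
      by (simp add: power2_eq_square algebra_simps)
    finally show ?thesis .
  qed
  ultimately show ?thesis by (simp add: mult.commute)
qed

lemma g_mono:
  assumes "k \<ge> 4" "even k" "a < b" "b \<le> k div 2"
  shows "2 - 2 * cos (2 * pi * real a / real k) < 2 - 2 * cos (2 * pi * real b / real k)"
proof -
  have kp: "real k > 0" using assms by simp
  have "real b \<le> real k / 2" using assms by (auto elim!: evenE)
  hence "2 * pi * real b / real k \<le> pi" using kp by (simp add: field_simps)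
  moreover have "2 * pi * real a / real k < 2 * pi * real b / real k"
    using assms kp by (simp add: divide_strict_right_mono)
  moreover have "0 \<le> 2 * pi * real a / real k" using kp by simp
  ultimately have "cos (2 * pi * real b / real k) < cos (2 * pi * real a / real k)"
    by (intro cos_monotone_0_pi) auto
  thus ?thesis by simp
qed

theorem lemma22:
  fixes k i j s t :: nat
  assumes "k \<ge> 4" and "even k"
    and "(i, j, s, t) \<in> nontrivial_overlaps k"
    and "i \<in> {1..k div 2}" and "j \<in> {1..k div 2}" and "s \<in> {1..k div 2}" and "t \<in> {1..k div 2}"
  shows "(i < j \<longleftrightarrow> s < t) \<and> (i < s \<longleftrightarrow> j < t)"
proof -
  define g where "g a = 2 - 2 * cos (2 * pi * real a / real k)" for a :: nat
  from assms(3) obtain \<omega> where eq: "phi k ^ \<omega> * (phi k ^ j - 1) * (phi k ^ s - 1)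
                       = (phi k ^ i - 1) * (phi k ^ t - 1)"
    unfolding nontrivial_overlaps_def is_overlap_def by auto
  have n1: "cmod (phi k ^ \<omega>) = 1" unfolding phi_def by (simp add: norm_power)
  have "cmod (phi k ^ \<omega> * (phi k ^ j - 1) * (phi k ^ s - 1))^2
      = cmod ((phi k ^ i - 1) * (phi k ^ t - 1))^2" using eq by simp
  hence geq: "g j * g s = g i * g t"
    unfolding g_def norm_g[symmetric] using n1 by (simp add: norm_mult power_mult_distrib)
  have mono: "a < b \<Longrightarrow> b \<le> k div 2 \<Longrightarrow> g a < g b" for a b
    unfolding g_def using g_mono assms(1,2) by blast
  have g0: "g 0 = 0" unfolding g_def by simp
  have pos: "a \<in> {1..k div 2} \<Longrightarrow> g a > 0" for a
    using mono[of 0 a] g0 by auto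
  have mono2: "a \<in> {1..k div 2} \<Longrightarrow> b \<in> {1..k div 2} \<Longrightarrow> a < b \<longleftrightarrow> g a < g b" for a b
    using mono[of a b] mono[of b a] by (cases "a < b"; cases "b < a") auto
  have pi: "g i > 0" "g j > 0" "g s > 0" "g t > 0" using pos assms(4-7) by auto
  have A: "g i < g j \<longleftrightarrow> g s < g t"
  proof
    assume "g i < g j"
    hence "g i * g s < g j * g s" using pi by simp
    thus "g s < g t" using geq pi by (metis mult.commute mult_less_cancel_left_pos)
  next
    assume "g s < g t"
    hence "g i * g s < g i * g t" using pi by simp
    thus "g i < g j" using geq pi by (metis mult_less_cancel_right_pos)
  qed
  have B: "g i < g s \<longleftrightarrow> g j < g t"
  proof
    assume "g i < g s"
    hence "g i * g j < g s * g j" using pi by simp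
    thus "g j < g t" using geq pi by (metis mult.commute mult_less_cancel_left_pos)
  next
    assume "g j < g t"
    hence "g i * g j < g i * g t" using pi by simp
    thus "g i < g s" using geq pi by (metis mult.commute mult_less_cancel_right_pos)
  qed
  show ?thesis using A B mono2 assms(4-7) by metis
qed

end
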